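(* Let $\mathbf{H}$ be a finite commutative semihypergroup with states $e_1,\dots,e_n$ that is derived from a group. Then for every $i$ and every $k$, the $k$-th row $(a_{i,1}(k),\dots,a_{i,n}(k))$ of $A_i$ is a rearrangement of the column $a_{1,1}$ (equivalently, of any column $a_{j,l}$); that is, every row of every $A_i$ has the same multiset of entries as the columns.
   Context: A finite commutative semihypergroup $\mathbf{H}$ with $n$ states $e_1,\dots,e_n$ is given by a convolution $e_i*e_j=\sum_{k=1}^n a_{i,j}(k)e_k$ ($i,j=1,\dots,n$), extended bilinearly, where $a_{i,j}(k)\ge 0$, $\sum_{k=1}^n a_{i,j}(k)=1$ for all $i,j$, the convolution is associative and commutative ($a_{i,j}(k)=a_{j,i}(k)$). Let $a_{i,j}\in\mathbb{R}^n$ denote the column vector $(a_{i,j}(1),\dots,a_{i,j}(n))^T$; let $A_i$ be the $n\times n$ matrix with columns $a_{i,1},\dots,a_{i,n}$ (so its $(k,j)$ entry is $a_{i,j}(k)$) and $B_i$ the matrix with columns $a_{1,i},\dots,a_{n,i}$. $\mathbf{H}$ is called derived from a group if it satisfies condition (A): the set $\{a_{i,j}: 1\le i,j\le n\}$ contains exactly $n$ distinct vectors, and for each $i$ the columns of $A_i$ are linearly independent and the columns of $B_i$ are linearly independent. *)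

theory Defs
  imports "HOL-Analysis.Analysis" "HOL-Library.Multiset"
begin

text \<open>States e_1..e_n are indexed by a finite type 'n (n = CARD('n)).
  The structure constants are given by a :: 'n => 'n => real^'n,
  a i j $ k being the coefficient a_{i,j}(k) of e_k in e_i * e_j.\<close>

definition fin_comm_semihypergroup :: "('n::finite \<Rightarrow> 'n \<Rightarrow> real^'n) \<Rightarrow> bool" where
  "fin_comm_semihypergroup a \<longleftrightarrow>
     (\<forall>i j k. a i j $ k \<ge> 0) \<and>
     (\<forall>i j. (\<Sum>k\<in>UNIV. a i j $ k) = 1) \<and>
     (\<forall>i j. a i j = a j i) \<and>
     (\<forall>i j l m. (\<Sum>k\<in>UNIV. a i j $ k * a k l $ m) = (\<Sum>k\<in>UNIV. a j l $ k * a i k $ m))"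

text \<open>Columns of A_i are a_{i,1},...,a_{i,n}; columns of B_i are a_{1,i},...,a_{n,i}.
  A family of columns is linearly independent iff it is injective and its range is independent.\<close>

definition derived_from_group :: "('n::finite \<Rightarrow> 'n \<Rightarrow> real^'n) \<Rightarrow> bool" where
  "derived_from_group a \<longleftrightarrow>
     card {a i j | i j. True} = CARD('n) \<and>
     (\<forall>i. inj (\<lambda>j. a i j) \<and> independent (range (\<lambda>j. a i j))) \<and>
     (\<forall>i. inj (\<lambda>j. a j i) \<and> independent (range (\<lambda>j. a j i)))"

end

theory Submission
  imports Defs
begin

lemma reindex_mset:
  fixes h :: "'n::finite \<Rightarrow> 'b"
  assumes "inj g"
  shows "image_mset (\<lambda>m. h (g m)) (mset_set (UNIV::'n set)) = image_mset h (mset_set UNIV)"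
proof -
  have s: "range g = UNIV" using assms by (simp add: finite_UNIV_inj_surj)
  have "image_mset (\<lambda>m. h (g m)) (mset_set (UNIV::'n set)) = image_mset h (image_mset g (mset_set UNIV))"
    by (simp add: multiset.map_comp comp_def)
  also have "\<dots> = image_mset h (mset_set UNIV)"
    using assms s by (simp add: image_mset_mset_set)
  finally show ?thesis .
qed

theorem corollary3:
  fixes a :: "'n::finite \<Rightarrow> 'n \<Rightarrow> real^'n"
  assumes "fin_comm_semihypergroup a"
    and "derived_from_group a"
  shows "\<forall>i k j l. image_mset (\<lambda>j'. a i j' $ k) (mset_set UNIV)
                   = image_mset (\<lambda>m. a j l $ m) (mset_set UNIV)"
proof -
  define S where "S = {a i j | i j. True}"
  have comm: "\<And>i j. a i j = a j i"
    using assms(1) unfolding fin_comm_semihypergroup_def by auto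
  have assoc: "\<And>i j l m. (\<Sum>k\<in>UNIV. a i j $ k * a k l $ m) = (\<Sum>k\<in>UNIV. a j l $ k * a i k $ m)"
    using assms(1) unfolding fin_comm_semihypergroup_def by blast
  have cardS: "card S = CARD('n)" and inj: "\<And>i. inj (a i)"
    and ind: "\<And>i. independent (range (a i))"
    using assms(2) unfolding derived_from_group_def S_def by (auto simp: eta_contract_eq)
  have finS: "finite S" unfolding S_def
    by (rule finite_subset[of _ "(\<lambda>(i,j). a i j) ` UNIV"]) auto
  have rng: "range (a i) = S" for i
  proof (rule card_subset_eq[OF finS])
    show "range (a i) \<subseteq> S" unfolding S_def by auto
    show "card (range (a i)) = card S" using cardS inj[of i] by (simp add: card_image)
  qed
  have indS: "independent S" using ind rng by metis
  have K: "a I J $ (inv (a L) v) = a J L $ (inv (a I) v)" if v: "v \<in> S" for I J L v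
  proof -
    have eq: "(\<Sum>k\<in>UNIV. (a I J $ k) *\<^sub>R a L k) = (\<Sum>k\<in>UNIV. (a J L $ k) *\<^sub>R a I k)"
      using assoc[of I J L] by (simp add: vec_eq_iff comm[of _ L] mult.commute)
    have r: "(\<Sum>k\<in>UNIV. (f k) *\<^sub>R a X k) = (\<Sum>w\<in>S. f (inv (a X) w) *\<^sub>R w)" for f X
    proof -
      have "(\<Sum>w\<in>S. f (inv (a X) w) *\<^sub>R w) = (\<Sum>w\<in>range (a X). f (inv (a X) w) *\<^sub>R w)"
        using rng by simp
      also have "\<dots> = (\<Sum>k\<in>UNIV. (f k) *\<^sub>R a X k)"
        using inj[of X] by (simp add: sum.reindex)
      finally show ?thesis by simp
    qed
    have z: "(\<Sum>w\<in>S. (a I J $ (inv (a L) w) - a J L $ (inv (a I) w)) *\<^sub>R w) = 0"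
      using eq r[of "\<lambda>k. a I J $ k" L] r[of "\<lambda>k. a J L $ k" I]
      by (simp add: scaleR_left_diff_distrib sum_subtractf)
    have h: "\<forall>u. (\<forall>v\<in>S. u v = 0) \<or> (\<Sum>v\<in>S. u v *\<^sub>R v) \<noteq> 0"
      using indS finS by (auto simp: real_vector.dependent_finite)
    have "\<forall>v\<in>S. a I J $ (inv (a L) v) - a J L $ (inv (a I) v) = 0"
      using h[rule_format, of "\<lambda>w. a I J $ (inv (a L) w) - a J L $ (inv (a I) w)"] z by blast
    then show ?thesis using v by simp
  qed
  have inS: "a x y \<in> S" for x y using rng by blast
  have E: "image_mset (\<lambda>m. a J L $ m) (mset_set UNIV) = image_mset (\<lambda>m. a I J $ m) (mset_set UNIV)" for I J L
  proof -
    define g where "g m = inv (a I) (a L m)" for m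
    have "inj g" unfolding g_def inj_def
      by (metis inj f_inv_into_f rangeI rng inj_eq)
    have "a J L $ g m = a I J $ m" for m
      using K[of "a L m" I J L, OF inS] inj[of L] unfolding g_def by simp
    then show ?thesis using reindex_mset[OF \<open>inj g\<close>, of "\<lambda>m. a J L $ m"] by simp
  qed
  have R: "image_mset (\<lambda>j'. a i j' $ k) (mset_set UNIV) = image_mset (\<lambda>m. a I i $ m) (mset_set UNIV)" for i k I
  proof -
    define f where "f j' = inv (a j') (a I k)" for j'
    have fa: "a j' (f j') = a I k" for j' unfolding f_def
      by (metis f_inv_into_f rangeI rng)
    have "inj f" unfolding inj_def
      by (metis fa comm inj inj_eq)
    have "a I i $ f j' = a i j' $ k" for j'
      using K[of "a I k" I i j', OF inS] inj[of I] unfolding f_def by simp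
    then show ?thesis using reindex_mset[OF \<open>inj f\<close>, of "\<lambda>m. a I i $ m"] by simp
  qed
  show ?thesis
  proof (intro allI)
    fix i k j l
    show "image_mset (\<lambda>j'. a i j' $ k) (mset_set UNIV) = image_mset (\<lambda>m. a j l $ m) (mset_set UNIV)"
      using R[of i k j] E[of j i] E[of j l] by simp
  qed
qed

end
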